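(* Let $M$ be any infinite subset of a finite-dimensional real Banach space (viewed as a pointed metric space with the induced metric) and let $Y$ be an infinite-dimensional real Banach space. Then $\mathrm{A}(M,Y)\subsetneqq\mathrm{Lip}_0(M,Y)$.
   Context: Throughout, metric spaces are complete and pointed, with a base point $0$. $\mathrm{Lip}_0(M,Y)$ is the Banach space of Lipschitz maps $f:M\to Y$ with $f(0)=0$, normed by $\|f\|=\sup_{p\neq q}\|f(p)-f(q)\|/d(p,q)$. A map $f$ attains its norm toward $y\in Y$ if there is a sequence $(p_n,q_n)$ in $M\times M$ with $p_n\neq q_n$ such that $[f(p_n)-f(q_n)]/d(p_n,q_n)\to y$ and $\|y\|=\|f\|$; $\mathrm{A}(M,Y)$ is the set of $f$ attaining their norm toward some vector. *)

theory Defs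
  imports "HOL-Analysis.Analysis"
begin

definition fin_dim_space :: "'a::real_vector itself \<Rightarrow> bool" where
  "fin_dim_space _ \<longleftrightarrow> (\<exists>B::'a set. finite B \<and> span B = UNIV)"

text \<open>Lip_0(M,Y) for the pointed metric space (M, base) with values in Y.
  Maps are represented as functions on the ambient type, normalised to 0 outside M.\<close>
definition Lip0 :: "'a::metric_space set \<Rightarrow> 'a \<Rightarrow> ('a \<Rightarrow> 'b::real_normed_vector) set" where
  "Lip0 M base = {f. f base = 0 \<and> (\<exists>L. L-lipschitz_on M f) \<and> (\<forall>x. x \<notin> M \<longrightarrow> f x = 0)}"

definition lip_norm :: "'a::metric_space set \<Rightarrow> ('a \<Rightarrow> 'b::real_normed_vector) \<Rightarrow> real" where
  "lip_norm M f = Sup {norm (f p - f q) / dist p q | p q. p \<in> M \<and> q \<in> M \<and> p \<noteq> q}"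

definition attains_norm_toward ::
  "'a::metric_space set \<Rightarrow> ('a \<Rightarrow> 'b::real_normed_vector) \<Rightarrow> 'b \<Rightarrow> bool" where
  "attains_norm_toward M f y \<longleftrightarrow>
     (\<exists>p q :: nat \<Rightarrow> 'a. (\<forall>n. p n \<in> M \<and> q n \<in> M \<and> p n \<noteq> q n) \<and>
        ((\<lambda>n. (1 / dist (p n) (q n)) *\<^sub>R (f (p n) - f (q n))) \<longlonglongrightarrow> y) \<and>
        norm y = lip_norm M f)"

definition A_set :: "'a::metric_space set \<Rightarrow> 'a \<Rightarrow> ('a \<Rightarrow> 'b::real_normed_vector) set" where
  "A_set M base = {f \<in> Lip0 M base. \<exists>y. attains_norm_toward M f y}"

end

theory Submission
  imports Defs
begin

lemma closed_if_cball_compact: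
  fixes S :: "'b::real_normed_vector set"
  assumes "\<And>R. compact (S \<inter> cball 0 R)"
  shows "closed S"
proof -
  have "x \<in> S" if xcl: "x \<in> closure S" for x
  proof -
    let ?K = "S \<inter> cball 0 (norm x + 1)"
    have "x \<in> closure ?K"
      unfolding closure_approachable
    proof (intro allI impI)
      fix e :: real assume "e > 0"
      have "min e 1 > 0" using \<open>e > 0\<close> by simp
      then obtain y where y: "y \<in> S" "dist y x < min e 1"
        using xcl unfolding closure_approachable by blast
      have "norm y \<le> norm x + 1"
        using y(2) norm_triangle_ineq2[of y x] by (simp add: dist_norm)
      then show "\<exists>y\<in>?K. dist y x < e" using y by auto
    qed
    moreover have "closed ?K" using assms compact_imp_closed by blast
    ultimately show ?thesis using closure_closed by auto
  qed
  then show ?thesis using closure_subset_eq closure_subset by blast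
qed

lemma infdist_approx:
  assumes "A \<noteq> {}" "infdist x A < e"
  obtains a where "a \<in> A" "dist x a < e"
proof -
  have "\<not> (\<forall>a\<in>A. e \<le> dist x a)"
  proof
    assume h: "\<forall>a\<in>A. e \<le> dist x a"
    have "e \<le> infdist x A" unfolding infdist_notempty[OF assms(1)]
      by (rule cINF_greatest[OF assms(1)]) (use h in auto)
    then show False using assms(2) by simp
  qed
  then show ?thesis using that by (meson not_le)
qed

lemma span_cball_compact:
  fixes F :: "'b::real_normed_vector set"
  assumes "finite F"
  shows "compact (span F \<inter> cball 0 R)"
  using assms
proof (induction F arbitrary: R rule: finite_induct)
  case empty
  have "span {} \<inter> cball 0 R \<subseteq> {0::'b}" by auto
  then show ?case by (meson finite_imp_compact finite_subset finite.emptyI finite_insert)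
next
  case (insert v F)
  show ?case
  proof (cases "v \<in> span F")
    case True
    then show ?thesis using insert.IH by (simp add: span_redundant)
  next
    case False
    have cl: "closed (span F)" by (rule closed_if_cball_compact) (rule insert.IH)
    define d where "d = infdist v (span F)"
    have "span F \<noteq> {}" using span_zero by auto
    then have dpos: "d > 0" unfolding d_def using infdist_pos_not_in_closed cl False by blast
    have key: "\<bar>t\<bar> * d \<le> norm (s + t *\<^sub>R v)" if "s \<in> span F" for s t
    proof (cases "t = 0")
      case True then show ?thesis by simp
    next
      case False
      have "- (1/t) *\<^sub>R s \<in> span F" using that by (simp add: span_scale span_neg)
      then have "d \<le> dist v (- (1/t) *\<^sub>R s)" unfolding d_def by (rule infdist_le)
      also have "dist v (- (1/t) *\<^sub>R s) = norm ((1/t) *\<^sub>R (s + t *\<^sub>R v))"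
        using False by (simp add: dist_norm algebra_simps)
      also have "\<dots> = norm (s + t *\<^sub>R v) / \<bar>t\<bar>" by simp
      finally show ?thesis using False by (simp add: field_simps)
    qed
    define R1 where "R1 = R + R / d * norm v"
    define g where "g = (\<lambda>p::'b \<times> real. fst p + snd p *\<^sub>R v)"
    define K where "K = ((span F \<inter> cball 0 R1) \<times> cball 0 (R / d)) \<inter> {p. norm (g p) \<le> R}"
    have cg: "continuous_on UNIV g" unfolding g_def by (intro continuous_intros)
    have "continuous_on UNIV (\<lambda>p. norm (g p))" using cg by (intro continuous_intros)
    then have "closed {p. norm (g p) \<le> R}"
      using closed_Collect_le[of "\<lambda>p. norm (g p)" "\<lambda>p. R"] by simp
    then have "compact K" unfolding K_def
      by (intro compact_Int_closed compact_Times insert.IH compact_cball)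
    then have "compact (g ` K)" by (meson compact_continuous_image continuous_on_subset cg subset_UNIV)
    moreover have "g ` K = span (insert v F) \<inter> cball 0 R"
    proof
      show "g ` K \<subseteq> span (insert v F) \<inter> cball 0 R"
      proof
        fix x assume "x \<in> g ` K"
        then obtain a b where ab: "a \<in> span F" "norm (a + b *\<^sub>R v) \<le> R" "x = a + b *\<^sub>R v"
          unfolding K_def g_def by auto
        have "a \<in> span (insert v F)" using ab(1) span_mono[of F "insert v F"] by auto
        moreover have "v \<in> span (insert v F)" by (simp add: span_base)
        ultimately have "x \<in> span (insert v F)" using ab(3) by (simp add: span_add span_scale)
        then show "x \<in> span (insert v F) \<inter> cball 0 R" using ab by auto
      qed
    next
      show "span (insert v F) \<inter> cball 0 R \<subseteq> g ` K"
      proof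
        fix x assume x: "x \<in> span (insert v F) \<inter> cball 0 R"
        then obtain t where t: "x - t *\<^sub>R v \<in> span F" using span_insert by blast
        define s where "s = x - t *\<^sub>R v"
        have xs: "x = s + t *\<^sub>R v" unfolding s_def by simp
        have nx: "norm x \<le> R" using x by auto
        have sF: "s \<in> span F" using t unfolding s_def .
        have "\<bar>t\<bar> * d \<le> norm (s + t *\<^sub>R v)" by (rule key[OF sF])
        then have "\<bar>t\<bar> * d \<le> R" using nx unfolding xs[symmetric] by linarith
        then have tb: "\<bar>t\<bar> \<le> R / d" using dpos by (simp add: field_simps)
        have "norm s \<le> norm x + \<bar>t\<bar> * norm v"
          unfolding s_def using norm_triangle_ineq4[of x "t *\<^sub>R v"] by simp
        also have "\<dots> \<le> R1" unfolding R1_def using nx tb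
          by (intro add_mono mult_right_mono) auto
        finally have "norm s \<le> R1" .
        moreover have "norm (s + t *\<^sub>R v) \<le> R" using nx unfolding xs[symmetric] .
        ultimately have "(s, t) \<in> K" unfolding K_def g_def using sF tb by (simp add: dist_norm)
        moreover have "g (s, t) = x" unfolding g_def xs by simp
        ultimately show "x \<in> g ` K" by force
      qed
    qed
    ultimately show ?thesis by simp
  qed
qed

lemma riesz:
  fixes F :: "'b::real_normed_vector set"
  assumes "finite F" "span F \<noteq> UNIV"
  shows "\<exists>u. norm u = 1 \<and> (\<forall>w\<in>span F. 1/2 \<le> norm (u - w))"
proof -
  have cl: "closed (span F)" by (rule closed_if_cball_compact) (rule span_cball_compact[OF assms(1)])
  obtain x where x: "x \<notin> span F" using assms(2) by auto
  have ne: "span F \<noteq> {}" using span_zero by auto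
  define d where "d = infdist x (span F)"
  have dpos: "d > 0" unfolding d_def using infdist_pos_not_in_closed cl ne x by blast
  have "infdist x (span F) < 2 * d" using dpos d_def by simp
  then obtain w0 where w0: "w0 \<in> span F" "dist x w0 < 2 * d" using infdist_approx[OF ne] by blast
  define e where "e = norm (x - w0)"
  have epos: "e > 0" unfolding e_def using w0 x by auto
  have e2: "e < 2 * d" unfolding e_def using w0 by (simp add: dist_norm)
  define u where "u = (1/e) *\<^sub>R (x - w0)"
  have "norm u = 1" unfolding u_def e_def using epos e_def by simp
  moreover have "1/2 \<le> norm (u - w)" if w: "w \<in> span F" for w
  proof -
    have "w0 + e *\<^sub>R w \<in> span F" using w w0 by (simp add: span_add span_scale)
    then have "d \<le> dist x (w0 + e *\<^sub>R w)" unfolding d_def by (rule infdist_le)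
    also have "dist x (w0 + e *\<^sub>R w) = norm (e *\<^sub>R (u - w))"
      unfolding u_def dist_norm using epos by (simp add: algebra_simps)
    also have "\<dots> = e * norm (u - w)" using epos by simp
    finally have "d \<le> e * norm (u - w)" .
    then have "e / 2 \<le> e * norm (u - w)" using e2 by simp
    then show ?thesis using epos by (simp add: field_simps)
  qed
  ultimately show ?thesis by blast
qed

definition farP :: "'b::real_normed_vector set \<Rightarrow> 'b \<Rightarrow> bool" where
  "farP F u \<longleftrightarrow> norm u = 1 \<and> (\<forall>w\<in>span F. 1/2 \<le> norm (u - w))"

definition pickR :: "'b::real_normed_vector set \<Rightarrow> 'b" where
  "pickR F = (SOME u. farP F u)"

primrec Vs :: "nat \<Rightarrow> 'b::real_normed_vector set" where
  "Vs 0 = {}"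
| "Vs (Suc n) = insert (pickR (Vs n)) (Vs n)"

definition vv :: "nat \<Rightarrow> 'b::real_normed_vector" where
  "vv n = pickR (Vs n)"

lemma finite_Vs: "finite (Vs n)"
  by (induction n) auto

lemma vv_in_Vs: "m < n \<Longrightarrow> vv m \<in> Vs n"
proof (induction n)
  case 0 then show ?case by simp
next
  case (Suc n)
  then show ?case by (cases "m = n") (auto simp: vv_def)
qed

lemma vv_props:
  assumes "\<And>F::'b::real_normed_vector set. finite F \<Longrightarrow> span F \<noteq> UNIV"
  shows "norm (vv n :: 'b) = 1" and "m < n \<Longrightarrow> 1/2 \<le> norm (vv n - t *\<^sub>R (vv m :: 'b))"
proof -
  have ex: "\<exists>u::'b. farP (Vs n) u"
    using riesz[OF finite_Vs assms[OF finite_Vs]] unfolding farP_def by blast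
  have "farP (Vs n) (vv n :: 'b)"
    unfolding vv_def pickR_def by (rule someI_ex[OF ex])
  then have P: "norm (vv n :: 'b) = 1 \<and> (\<forall>w\<in>span (Vs n). 1/2 \<le> norm ((vv n :: 'b) - w))"
    unfolding farP_def .
  then show "norm (vv n :: 'b) = 1" by simp
  assume "m < n"
  then have "(vv m :: 'b) \<in> Vs n" by (rule vv_in_Vs)
  then have "t *\<^sub>R (vv m :: 'b) \<in> span (Vs n)" by (intro span_scale span_base)
  then show "1/2 \<le> norm (vv n - t *\<^sub>R (vv m :: 'b))" using P by blast
qed

definition aa :: "nat \<Rightarrow> real" where "aa n = 1 - 1 / (real n + 2)"

definition Rep :: "(nat \<Rightarrow> 'b::real_normed_vector) \<Rightarrow> 'b \<Rightarrow> bool" where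
  "Rep v q \<longleftrightarrow> (\<exists>n m \<alpha> \<beta>. n \<noteq> m \<and> q = \<alpha> *\<^sub>R v n + \<beta> *\<^sub>R v m \<and> \<bar>\<beta>\<bar> \<le> \<bar>\<alpha>\<bar> \<and> \<bar>\<alpha>\<bar> \<le> aa n
      \<and> \<bar>\<alpha>\<bar> + \<bar>\<beta>\<bar> \<le> aa (max n m) \<and> \<bar>\<beta>\<bar> \<le> 1 / (real (max n m) + 1))"

lemma rep_norm:
  assumes "\<And>n. norm (v n) = 1" "Rep v q"
  shows "norm q \<le> 1"
proof -
  obtain n m \<alpha> \<beta> where h: "q = \<alpha> *\<^sub>R v n + \<beta> *\<^sub>R v m" "\<bar>\<alpha>\<bar> + \<bar>\<beta>\<bar> \<le> aa (max n m)"
    using assms(2) unfolding Rep_def by blast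
  have "norm q \<le> \<bar>\<alpha>\<bar> + \<bar>\<beta>\<bar>" unfolding h(1) using norm_triangle_ineq[of "\<alpha> *\<^sub>R v n" "\<beta> *\<^sub>R v m"] assms(1) by simp
  also have "\<dots> \<le> 1" using h(2) unfolding aa_def
    using divide_nonneg_nonneg[of 1 "real (max n m) + 2"] by linarith
  finally show ?thesis .
qed

lemma rep_close:
  assumes v1: "\<And>n. norm (v n) = 1" and q: "q = \<alpha> *\<^sub>R v n + \<beta> *\<^sub>R v m"
    and b: "\<bar>\<alpha>\<bar> + \<bar>\<beta>\<bar> \<le> aa (max n m)" "\<bar>\<beta>\<bar> \<le> 1 / (real (max n m) + 1)"
    and g: "norm q > 1 - \<gamma>"
  shows "\<bar>\<beta>\<bar> < 2 * \<gamma>" "\<bar>\<alpha>\<bar> > 1 - 3 * \<gamma>"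
proof -
  define N where "N = real (max n m)"
  have N0: "N \<ge> 0" unfolding N_def by simp
  have "norm q \<le> \<bar>\<alpha>\<bar> + \<bar>\<beta>\<bar>" unfolding q using norm_triangle_ineq[of "\<alpha> *\<^sub>R v n" "\<beta> *\<^sub>R v m"] v1 by simp
  then have "1 - \<gamma> < 1 - 1 / (N + 2)" using b(1) g unfolding aa_def N_def by simp
  then have g1: "1 / (N + 2) < \<gamma>" by simp
  have "1 / (N + 1) \<le> 2 / (N + 2)" using N0 by (simp add: field_simps)
  then show bb: "\<bar>\<beta>\<bar> < 2 * \<gamma>" using b(2) g1 unfolding N_def[symmetric] by simp
  have "norm q \<le> \<bar>\<alpha>\<bar> + \<bar>\<beta>\<bar>" by fact
  then show "\<bar>\<alpha>\<bar> > 1 - 3 * \<gamma>" using g bb by simp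
qed

lemma sep2:
  fixes v :: "nat \<Rightarrow> 'b::real_normed_vector"
  assumes v1: "\<And>n. norm (v n) = 1"
    and vs: "\<And>m n t. m < n \<Longrightarrow> 1/2 \<le> norm (v n - t *\<^sub>R v m)"
    and "n \<noteq> n'" "\<mu> > 0" "\<bar>\<alpha>\<bar> \<ge> \<mu>" "\<bar>\<alpha>'\<bar> \<ge> \<mu>"
  shows "norm (\<alpha> *\<^sub>R v n - \<alpha>' *\<^sub>R v n') \<ge> \<mu> / 2"
proof (cases "n' < n")
  case True
  have "\<alpha> *\<^sub>R v n - \<alpha>' *\<^sub>R v n' = \<alpha> *\<^sub>R (v n - (\<alpha>'/\<alpha>) *\<^sub>R v n')"
    using assms by (auto simp: algebra_simps)
  then have "norm (\<alpha> *\<^sub>R v n - \<alpha>' *\<^sub>R v n') = \<bar>\<alpha>\<bar> * norm (v n - (\<alpha>'/\<alpha>) *\<^sub>R v n')" by simp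
  moreover have "1/2 \<le> norm (v n - (\<alpha>'/\<alpha>) *\<^sub>R v n')" using vs True by blast
  moreover have "\<mu> * (1/2) \<le> \<bar>\<alpha>\<bar> * norm (v n - (\<alpha>'/\<alpha>) *\<^sub>R v n')"
    using calculation(2) assms(5) assms(4) by (intro mult_mono) auto
  ultimately show ?thesis by simp
next
  case False
  then have lt: "n < n'" using assms by simp
  have "\<alpha> *\<^sub>R v n - \<alpha>' *\<^sub>R v n' = - (\<alpha>' *\<^sub>R (v n' - (\<alpha>/\<alpha>') *\<^sub>R v n))"
    using assms by (auto simp: algebra_simps)
  then have "norm (\<alpha> *\<^sub>R v n - \<alpha>' *\<^sub>R v n') = \<bar>\<alpha>'\<bar> * norm (v n' - (\<alpha>/\<alpha>') *\<^sub>R v n)"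
    by (simp only: norm_minus_cancel norm_scaleR)
  moreover have "1/2 \<le> norm (v n' - (\<alpha>/\<alpha>') *\<^sub>R v n)" using vs lt by blast
  moreover have "\<mu> * (1/2) \<le> \<bar>\<alpha>'\<bar> * norm (v n' - (\<alpha>/\<alpha>') *\<^sub>R v n)"
    using calculation(2) assms(6) assms(4) by (intro mult_mono) auto
  ultimately show ?thesis by simp
qed

lemma norm4: "norm (a - b - c + d) \<le> norm a + norm b + norm c + norm (d::'b::real_normed_vector)"
proof -
  have "norm (a - b - c + d) \<le> norm (a - b - c) + norm d" by (rule norm_triangle_ineq)
  also have "norm (a - b - c) \<le> norm (a - b) + norm c" by (rule norm_triangle_ineq4)
  also have "norm (a - b) \<le> norm a + norm b" by (rule norm_triangle_ineq4)
  finally show ?thesis by simp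
qed

lemma no_attain:
  fixes v :: "nat \<Rightarrow> 'b::real_normed_vector"
  assumes v1: "\<And>n. norm (v n) = 1"
    and vs: "\<And>m n t. m < n \<Longrightarrow> 1/2 \<le> norm (v n - t *\<^sub>R v m)"
    and rep: "\<And>k. Rep v (Q k)" and lim: "Q \<longlonglongrightarrow> y"
  shows "norm y \<noteq> 1"
proof
  assume ny: "norm y = 1"
  have close: "\<exists>N. \<forall>k\<ge>N. norm (Q k - y) < \<gamma> \<and> norm (Q k) > 1 - \<gamma>" if gp: "\<gamma> > 0" for \<gamma>
  proof -
    obtain N where N: "\<forall>k\<ge>N. norm (Q k - y) < \<gamma>"
      using lim gp unfolding LIMSEQ_iff by blast
    have "norm (Q k) > 1 - \<gamma>" if "k \<ge> N" for k
      using N that ny norm_triangle_ineq2[of y "Q k"] norm_minus_commute[of y "Q k"] by auto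
    then show ?thesis using N by blast
  qed
  define \<eta> :: real where "\<eta> = 1/32"
  obtain N0 where N0: "\<forall>k\<ge>N0. norm (Q k - y) < \<eta> \<and> norm (Q k) > 1 - \<eta>"
    using close[of \<eta>] unfolding \<eta>_def by auto
  obtain n0 m0 \<alpha>0 \<beta>0 where r0: "n0 \<noteq> m0" "Q N0 = \<alpha>0 *\<^sub>R v n0 + \<beta>0 *\<^sub>R v m0"
      "\<bar>\<beta>0\<bar> \<le> \<bar>\<alpha>0\<bar>" "\<bar>\<alpha>0\<bar> \<le> aa n0" "\<bar>\<alpha>0\<bar> + \<bar>\<beta>0\<bar> \<le> aa (max n0 m0)"
      "\<bar>\<beta>0\<bar> \<le> 1 / (real (max n0 m0) + 1)"
    using rep[of N0] unfolding Rep_def by blast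
  have c0: "\<bar>\<beta>0\<bar> < 2 * \<eta>" "\<bar>\<alpha>0\<bar> > 1 - 3 * \<eta>"
    using rep_close[OF v1 r0(2) r0(5) r0(6)] N0 by auto
  define \<gamma> where "\<gamma> = min \<eta> (1 / (4 * (real n0 + 2)))"
  have gpos: "\<gamma> > 0" unfolding \<gamma>_def \<eta>_def by simp
  obtain N1 where N1: "\<forall>k\<ge>N1. norm (Q k - y) < \<gamma> \<and> norm (Q k) > 1 - \<gamma>"
    using close[OF gpos] by auto
  obtain n1 m1 \<alpha>1 \<beta>1 where r1: "n1 \<noteq> m1" "Q N1 = \<alpha>1 *\<^sub>R v n1 + \<beta>1 *\<^sub>R v m1"
      "\<bar>\<beta>1\<bar> \<le> \<bar>\<alpha>1\<bar>" "\<bar>\<alpha>1\<bar> \<le> aa n1" "\<bar>\<alpha>1\<bar> + \<bar>\<beta>1\<bar> \<le> aa (max n1 m1)"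
      "\<bar>\<beta>1\<bar> \<le> 1 / (real (max n1 m1) + 1)"
    using rep[of N1] unfolding Rep_def by blast
  have c1: "\<bar>\<beta>1\<bar> < 2 * \<gamma>" "\<bar>\<alpha>1\<bar> > 1 - 3 * \<gamma>"
    using rep_close[OF v1 r1(2) r1(5) r1(6)] N1 by auto
  have "1 - 3 * \<gamma> > aa n0"
  proof -
    have "\<gamma> \<le> 1 / (4 * (real n0 + 2))" unfolding \<gamma>_def by simp
    moreover have "3 * (1 / (4 * (real n0 + 2))) < 1 / (real n0 + 2)" by (simp add: field_simps)
    ultimately show ?thesis unfolding aa_def by simp
  qed
  then have "n1 \<noteq> n0" using c1(2) r1(4) by auto
  have gle: "\<gamma> \<le> \<eta>" unfolding \<gamma>_def by simp
  have "norm (\<alpha>0 *\<^sub>R v n0 - \<alpha>1 *\<^sub>R v n1) \<ge> (1 - 3 * \<eta>) / 2"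
    using \<open>n1 \<noteq> n0\<close> c0 c1 gle by (intro sep2[OF v1 vs]) (auto simp: \<eta>_def)
  moreover have "norm (\<alpha>0 *\<^sub>R v n0 - \<alpha>1 *\<^sub>R v n1) < 6 * \<eta>"
  proof -
    have eq: "\<alpha>0 *\<^sub>R v n0 - \<alpha>1 *\<^sub>R v n1 = (Q N0 - y) - (Q N1 - y) - \<beta>0 *\<^sub>R v m0 + \<beta>1 *\<^sub>R v m1"
      unfolding r0(2) r1(2) by (simp add: algebra_simps)
    have "norm (\<alpha>0 *\<^sub>R v n0 - \<alpha>1 *\<^sub>R v n1) \<le> norm (Q N0 - y) + norm (Q N1 - y) + \<bar>\<beta>0\<bar> + \<bar>\<beta>1\<bar>"
      unfolding eq using v1 norm4[of "Q N0 - y" "Q N1 - y" "\<beta>0 *\<^sub>R v m0" "\<beta>1 *\<^sub>R v m1"] by simp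
    moreover have "norm (Q N0 - y) < \<eta>" "norm (Q N1 - y) < \<gamma>" using N0 N1 by auto
    ultimately show ?thesis using c0 c1 gle by linarith
  qed
  ultimately show False unfolding \<eta>_def by simp
qed

definition phi :: "(nat \<Rightarrow> real) \<Rightarrow> (nat \<Rightarrow> real) \<Rightarrow> nat \<Rightarrow> real \<Rightarrow> real" where
  "phi c r n s = max 0 (r n - \<bar>s - c n\<bar>)"

definition GG :: "(nat \<Rightarrow> real) \<Rightarrow> (nat \<Rightarrow> real) \<Rightarrow> (nat \<Rightarrow> 'b::real_normed_vector) \<Rightarrow> real \<Rightarrow> 'b" where
  "GG c r v s = (let N = (SOME n. 0 < phi c r n s) in
     if 0 < phi c r N s then (aa N * phi c r N s) *\<^sub>R v N else 0)"

lemma phi_nonneg: "0 \<le> phi c r n s" unfolding phi_def by simp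

lemma phi_lip: "\<bar>phi c r n s - phi c r n t\<bar> \<le> \<bar>s - t\<bar>"
  unfolding phi_def by (simp add: abs_if split: if_splits) (smt (verit) abs_triangle_ineq4)

lemma phi_pos: "0 < phi c r n s \<Longrightarrow> phi c r n s = r n - \<bar>s - c n\<bar>"
  unfolding phi_def by simp

definition sepc :: "(nat \<Rightarrow> real) \<Rightarrow> (nat \<Rightarrow> real) \<Rightarrow> bool" where
  "sepc c r \<longleftrightarrow> (\<forall>n m. n \<noteq> m \<longrightarrow> r n + r m + (real (max n m) + 1) * min (r n) (r m) \<le> \<bar>c n - c m\<bar>)"

lemma cross:
  assumes "sepc c r" "\<forall>n. r n > 0" "n \<noteq> m" "0 < phi c r n s" "0 < phi c r m t"
  shows "phi c r n s + phi c r m t + (real (max n m) + 1) * min (r n) (r m) \<le> \<bar>s - t\<bar>"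
proof -
  have s: "r n + r m + (real (max n m) + 1) * min (r n) (r m) \<le> \<bar>c n - c m\<bar>"
    using assms(1,3) unfolding sepc_def by blast
  have "\<bar>c n - c m\<bar> \<le> \<bar>s - c n\<bar> + \<bar>s - t\<bar> + \<bar>t - c m\<bar>" by linarith
  then show ?thesis using s phi_pos[OF assms(4)] phi_pos[OF assms(5)] by linarith
qed

lemma uniq:
  assumes "sepc c r" "\<forall>n. r n > 0" "0 < phi c r n s" "0 < phi c r m s"
  shows "n = m"
proof (rule ccontr)
  assume "n \<noteq> m"
  from cross[OF assms(1,2) this assms(3,4)]
  have "phi c r n s + phi c r m s + (real (max n m) + 1) * min (r n) (r m) \<le> 0" by simp
  moreover have "0 \<le> (real (max n m) + 1) * min (r n) (r m)" using assms(2)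
    by (simp add: less_imp_le)
  ultimately show False using assms(3,4) by linarith
qed

lemma GG_eq:
  assumes "sepc c r" "\<forall>n. r n > 0" "0 < phi c r n s"
  shows "GG c r v s = (aa n * phi c r n s) *\<^sub>R v n"
proof -
  have "0 < phi c r (SOME n. 0 < phi c r n s) s" using assms(3) by (rule someI)
  then have "(SOME n. 0 < phi c r n s) = n" using uniq[OF assms(1,2)] assms(3) by blast
  then show ?thesis unfolding GG_def Let_def using assms(3) by simp
qed

lemma GG_zero:
  assumes "\<forall>n. \<not> 0 < phi c r n s"
  shows "GG c r v s = 0"
  unfolding GG_def Let_def using assms by simp

lemma aa_mono: "m \<le> n \<Longrightarrow> aa m \<le> aa n"
  unfolding aa_def by (simp add: frac_le)

lemma aa_le1: "aa n \<le> 1" unfolding aa_def by simp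
lemma aa_pos: "0 < aa n" unfolding aa_def by (simp add: field_simps)

lemma Rep_single:
  assumes "\<bar>\<alpha>\<bar> \<le> aa n"
  shows "Rep v (\<alpha> *\<^sub>R v n)"
  unfolding Rep_def
  apply (rule exI[of _ n], rule exI[of _ "Suc n"], rule exI[of _ \<alpha>], rule exI[of _ 0])
  using assms aa_mono[of n "Suc n"] by auto

lemma Rep_double:
  assumes "n \<noteq> m" "\<bar>\<alpha>\<bar> \<le> aa n" "\<bar>\<beta>\<bar> \<le> aa m" "\<bar>\<alpha>\<bar> + \<bar>\<beta>\<bar> \<le> aa (max n m)"
    "min \<bar>\<alpha>\<bar> \<bar>\<beta>\<bar> \<le> 1 / (real (max n m) + 1)"
  shows "Rep v (\<alpha> *\<^sub>R v n + \<beta> *\<^sub>R v m)"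
proof (cases "\<bar>\<beta>\<bar> \<le> \<bar>\<alpha>\<bar>")
  case True
  have "\<bar>\<beta>\<bar> \<le> 1 / (real (max n m) + 1)" using assms(5) True by (simp add: min_def split: if_splits)
  then show ?thesis unfolding Rep_def using assms True by blast
next
  case False
  have "\<bar>\<alpha>\<bar> \<le> 1 / (real (max m n) + 1)" using assms(5) False by (simp add: min_def max.commute split: if_splits)
  moreover have "\<alpha> *\<^sub>R v n + \<beta> *\<^sub>R v m = \<beta> *\<^sub>R v m + \<alpha> *\<^sub>R v n" by (simp add: add.commute)
  moreover have "\<bar>\<beta>\<bar> + \<bar>\<alpha>\<bar> \<le> aa (max m n)" using assms(4) by (simp add: max.commute add.commute)
  moreover have "\<bar>\<alpha>\<bar> \<le> \<bar>\<beta>\<bar>" using False by simp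
  moreover have "m \<noteq> n" using assms(1) by simp
  ultimately show ?thesis unfolding Rep_def using assms(3) by blast
qed

lemma rep_GG:
  fixes v :: "nat \<Rightarrow> 'b::real_normed_vector"
  assumes sep: "sepc c r" and rpos: "\<forall>n. r n > 0" and d: "d > 0" "\<bar>s - t\<bar> \<le> d"
  shows "Rep v ((1/d) *\<^sub>R (GG c r v s - GG c r v t))"
proof (cases "\<exists>n. 0 < phi c r n s")
  case True
  then obtain n where n: "0 < phi c r n s" by blast
  have Gs: "GG c r v s = (aa n * phi c r n s) *\<^sub>R v n" by (rule GG_eq[OF sep rpos n])
  show ?thesis
  proof (cases "\<exists>m. 0 < phi c r m t")
    case True
    then obtain m where m: "0 < phi c r m t" by blast
    have Gt: "GG c r v t = (aa m * phi c r m t) *\<^sub>R v m" by (rule GG_eq[OF sep rpos m])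
    show ?thesis
    proof (cases "n = m")
      case True
      have eq: "(1/d) *\<^sub>R (GG c r v s - GG c r v t) = (aa n * (phi c r n s - phi c r n t) / d) *\<^sub>R v n"
        unfolding Gs Gt True scaleR_diff_left[symmetric] scaleR_scaleR
        by (rule arg_cong[where f="\<lambda>z. z *\<^sub>R v m"]) (simp add: field_simps)
      have "\<bar>phi c r n s - phi c r n t\<bar> \<le> d" using phi_lip[of c r n s t] d by linarith
      then have "aa n * \<bar>phi c r n s - phi c r n t\<bar> / d \<le> aa n"
        using d aa_pos[of n] by (simp add: field_simps)
      then have "\<bar>aa n * (phi c r n s - phi c r n t) / d\<bar> \<le> aa n"
        using aa_pos[of n] d by (simp add: abs_mult)
      then show ?thesis unfolding eq by (rule Rep_single)
    next
      case False
      have cr: "phi c r n s + phi c r m t + (real (max n m) + 1) * min (r n) (r m) \<le> \<bar>s - t\<bar>"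
        by (rule cross[OF sep rpos False n m])
      have X0: "0 \<le> (real (max n m) + 1) * min (r n) (r m)" using rpos by (simp add: less_imp_le)
      have eq: "(1/d) *\<^sub>R (GG c r v s - GG c r v t) =
          (aa n * phi c r n s / d) *\<^sub>R v n + (- (aa m * phi c r m t / d)) *\<^sub>R v m"
        unfolding Gs Gt by (simp add: algebra_simps)
      have pn: "phi c r n s \<le> d" "phi c r m t \<le> d" using cr X0 d phi_nonneg[of c r n s] phi_nonneg[of c r m t] by linarith+
      have an: "0 < aa n" "0 < aa m" "aa n \<le> 1" "aa m \<le> 1" using aa_pos aa_le1 by auto
      have A: "\<bar>aa n * phi c r n s / d\<bar> = aa n * phi c r n s / d" using an n d by simp
      have B: "\<bar>- (aa m * phi c r m t / d)\<bar> = aa m * phi c r m t / d" using an m d by simp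
      show ?thesis unfolding eq
      proof (rule Rep_double[OF False], unfold A B)
        show "aa n * phi c r n s / d \<le> aa n" using pn an d
          by (simp add: divide_le_eq mult_left_le)
        show "aa m * phi c r m t / d \<le> aa m" using pn an d
          by (simp add: divide_le_eq mult_left_le)
        have "aa n * phi c r n s + aa m * phi c r m t \<le> aa (max n m) * (phi c r n s + phi c r m t)"
          using aa_mono[of n "max n m"] aa_mono[of m "max n m"] n m
          by (simp add: distrib_left mult_right_mono less_imp_le add_mono)
        also have "\<dots> \<le> aa (max n m) * d" using cr X0 d aa_pos[of "max n m"]
          by (intro mult_left_mono) auto
        finally show "aa n * phi c r n s / d + aa m * phi c r m t / d \<le> aa (max n m)"
          using d by (simp add: add_divide_distrib[symmetric] divide_le_eq mult.commute)
        have "min (phi c r n s) (phi c r m t) \<le> min (r n) (r m)"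
          unfolding phi_def using rpos[rule_format, of n] rpos[rule_format, of m] by auto
        then have "(real (max n m) + 1) * min (phi c r n s) (phi c r m t) \<le> d"
          using cr d phi_nonneg[of c r n s] phi_nonneg[of c r m t]
          by (smt (verit, best) mult_left_mono of_nat_0_le_iff)
        then have mm: "min (phi c r n s) (phi c r m t) / d \<le> 1 / (real (max n m) + 1)"
          using d by (simp add: field_simps)
        have "min (aa n * phi c r n s / d) (aa m * phi c r m t / d) \<le> min (phi c r n s) (phi c r m t) / d"
        proof -
          have h1: "aa n * phi c r n s / d \<le> phi c r n s / d"
            using an d phi_nonneg[of c r n s] by (intro divide_right_mono mult_left_le_one_le) auto
          have h2: "aa m * phi c r m t / d \<le> phi c r m t / d"
            using an d phi_nonneg[of c r m t] by (intro divide_right_mono mult_left_le_one_le) auto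
          show ?thesis
          proof (cases "phi c r n s \<le> phi c r m t")
            case True then show ?thesis using h1 by (simp add: min_def)
          next
            case False then show ?thesis using h2 by (simp add: min_def)
          qed
        qed
        then show "min (aa n * phi c r n s / d) (aa m * phi c r m t / d) \<le> 1 / (real (max n m) + 1)"
          using mm by linarith
      qed
    qed
  next
    case False
    then have Gt: "GG c r v t = 0" by (intro GG_zero) auto
    have eq: "(1/d) *\<^sub>R (GG c r v s - GG c r v t) = (aa n * phi c r n s / d) *\<^sub>R v n"
      unfolding Gs Gt by simp
    have "phi c r n t = 0" using False phi_nonneg[of c r n t] by (metis less_eq_real_def)
    then have "phi c r n s \<le> d" using phi_lip[of c r n s t] d by linarith
    then have "\<bar>aa n * phi c r n s / d\<bar> \<le> aa n" using aa_pos[of n] n d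
      by (simp add: divide_le_eq mult_left_le)
    then show ?thesis unfolding eq by (rule Rep_single)
  qed
next
  case False
  then have Gs: "GG c r v s = 0" by (intro GG_zero) auto
  show ?thesis
  proof (cases "\<exists>m. 0 < phi c r m t")
    case True
    then obtain m where m: "0 < phi c r m t" by blast
    have Gt: "GG c r v t = (aa m * phi c r m t) *\<^sub>R v m" by (rule GG_eq[OF sep rpos m])
    have eq: "(1/d) *\<^sub>R (GG c r v s - GG c r v t) = (- (aa m * phi c r m t / d)) *\<^sub>R v m"
      unfolding Gs Gt by simp
    have "phi c r m s = 0" using False phi_nonneg[of c r m s] by (metis less_eq_real_def)
    then have "phi c r m t \<le> d" using phi_lip[of c r m s t] d by linarith
    then have "\<bar>- (aa m * phi c r m t / d)\<bar> \<le> aa m" using aa_pos[of m] m d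
      by (simp add: divide_le_eq mult_left_le)
    then show ?thesis unfolding eq by (rule Rep_single)
  next
    case False
    then have Gt: "GG c r v t = 0" by (intro GG_zero) auto
    have "Rep v (0 *\<^sub>R v 0)" by (rule Rep_single) (simp add: aa_pos less_imp_le)
    then show ?thesis unfolding Gs Gt by simp
  qed
qed

lemma core:
  fixes M :: "'a::metric_space set" and \<rho> :: "'a \<Rightarrow> real" and x y :: "nat \<Rightarrow> 'a"
    and v :: "nat \<Rightarrow> 'b::real_normed_vector" and c r :: "nat \<Rightarrow> real"
  assumes rho: "\<And>p q. \<bar>\<rho> p - \<rho> q\<bar> \<le> dist p q"
    and xyM: "\<And>n. x n \<in> M" "\<And>n. y n \<in> M"
    and cdef: "\<And>n. c n = \<rho> (x n)" and rdef: "\<And>n. r n = \<bar>\<rho> (x n) - \<rho> (y n)\<bar>"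
    and rpos: "\<forall>n. r n > 0" and sep: "sepc c r"
    and ratio: "\<And>n. dist (x n) (y n) \<le> r n * (1 + 2 / (real n + 2))"
    and v1: "\<And>n. norm (v n) = 1" and vs: "\<And>m n t. m < n \<Longrightarrow> 1/2 \<le> norm (v n - t *\<^sub>R v m)"
    and base: "base \<in> M"
  shows "\<exists>f::'a \<Rightarrow> 'b. f \<in> Lip0 M base \<and> f \<notin> A_set M base"
proof -
  define f where "f = (\<lambda>p. if p \<in> M then GG c r v (\<rho> p) - GG c r v (\<rho> base) else 0)"
  have quot: "Rep v ((1 / dist p q) *\<^sub>R (f p - f q))" if "p \<in> M" "q \<in> M" "p \<noteq> q" for p q
  proof -
    have "f p - f q = GG c r v (\<rho> p) - GG c r v (\<rho> q)" unfolding f_def using that by simp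
    moreover have "dist p q > 0" using that by simp
    ultimately show ?thesis using rep_GG[OF sep rpos _ rho] by simp
  qed
  have nb: "norm (f p - f q) \<le> dist p q" if "p \<in> M" "q \<in> M" for p q
  proof (cases "p = q")
    case True then show ?thesis by simp
  next
    case False
    have "norm ((1 / dist p q) *\<^sub>R (f p - f q)) \<le> 1" using rep_norm[OF v1 quot[OF that False]] .
    moreover have "norm ((1 / dist p q) *\<^sub>R (f p - f q)) = norm (f p - f q) / dist p q"
      by (simp only: norm_scaleR) simp
    ultimately show ?thesis using False by (simp add: divide_le_eq)
  qed
  have fL: "f \<in> Lip0 M base"
    unfolding Lip0_def
  proof (intro CollectI conjI allI impI exI)
    show "f base = 0" unfolding f_def using base by simp
    show "1-lipschitz_on M f" by (rule lipschitz_onI) (use nb in \<open>auto simp: dist_norm\<close>)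
    show "f z = 0" if "z \<notin> M" for z unfolding f_def using that by simp
  qed
  define S where "S = {norm (f p - f q) / dist p q | p q. p \<in> M \<and> q \<in> M \<and> p \<noteq> q}"
  have S1: "z \<le> 1" if "z \<in> S" for z
    using that nb unfolding S_def by (auto simp: divide_le_eq)
  have xy_ne: "x n \<noteq> y n" for n
  proof
    assume "x n = y n"
    then have "r n = 0" using rdef[of n] by simp
    then show False using rpos by (metis less_irrefl)
  qed
  have low: "real (n + 1) / real (n + 4) \<in> {z. \<exists>w\<in>S. z \<le> w}" for n
  proof -
    have pn: "0 < phi c r n (c n)" using rpos unfolding phi_def by simp
    have Gx: "GG c r v (\<rho> (x n)) = (aa n * r n) *\<^sub>R v n"
      using GG_eq[OF sep rpos pn, of v] cdef[of n] unfolding phi_def using rpos by simp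
    have "\<not> 0 < phi c r m (\<rho> (y n))" for m
    proof
      assume pm: "0 < phi c r m (\<rho> (y n))"
      show False
      proof (cases "m = n")
        case True then show False using pm unfolding phi_def rdef cdef
          by (simp add: abs_minus_commute)
      next
        case False
        have "r n + r m + (real (max n m) + 1) * min (r n) (r m) \<le> \<bar>c n - c m\<bar>"
          using sep False unfolding sepc_def by metis
        moreover have "0 \<le> (real (max n m) + 1) * min (r n) (r m)" using rpos by (simp add: less_imp_le)
        moreover have "\<bar>\<rho> (y n) - c m\<bar> < r m" using pm unfolding phi_def by simp
        moreover have "\<bar>c n - \<rho> (y n)\<bar> = r n" using rdef cdef by simp
        ultimately show False by linarith
      qed
    qed
    then have Gy: "GG c r v (\<rho> (y n)) = 0" by (intro GG_zero) auto
    have fd: "f (x n) - f (y n) = (aa n * r n) *\<^sub>R v n" unfolding f_def using xyM Gx Gy by simp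
    have nf: "norm (f (x n) - f (y n)) = aa n * r n" unfolding fd using v1 aa_pos[of n] rpos
      by (simp add: less_imp_le)
    have dpos: "dist (x n) (y n) > 0" using xy_ne by simp
    have "real (n + 1) / real (n + 4) = aa n * r n / (r n * (1 + 2 / (real n + 2)))"
    proof -
      have rn: "r n > 0" using rpos by blast
      have e1: "aa n = real (n+1) / (real n + 2)" unfolding aa_def by (simp add: field_simps)
      have e2: "1 + 2 / (real n + 2) = real (n+4) / (real n + 2)" by (simp add: field_simps)
      have "aa n * r n / (r n * (1 + 2 / (real n + 2))) = aa n / (1 + 2 / (real n + 2))"
        using rn by simp
      also have "\<dots> = real (n + 1) / real (n + 4)" unfolding e1 e2
      proof -
        have gen: "\<And>a b c. c \<noteq> 0 \<Longrightarrow> (a / c) / (b / c) = (a::real) / b" by simp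
        show "real (n + 1) / (real n + 2) / (real (n + 4) / (real n + 2)) = real (n + 1) / real (n + 4)"
          by (rule gen) simp
      qed
      finally show ?thesis by simp
    qed
    also have "\<dots> \<le> aa n * r n / dist (x n) (y n)"
    proof -
      have rn: "r n > 0" using rpos by blast
      have "0 < 1 + 2 / (real n + 2)" by (simp add: add_pos_pos)
      then show ?thesis using dpos ratio[of n] aa_pos[of n] rn
        by (intro divide_left_mono) (auto intro!: mult_pos_pos simp: less_imp_le)
    qed
    finally have "real (n + 1) / real (n + 4) \<le> norm (f (x n) - f (y n)) / dist (x n) (y n)"
      unfolding nf .
    moreover have "norm (f (x n) - f (y n)) / dist (x n) (y n) \<in> S"
      unfolding S_def using xyM xy_ne by blast
    ultimately show ?thesis by blast
  qed
  have Sne: "S \<noteq> {}" using low[of 0] by blast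
  have lipn: "lip_norm M f = 1"
    unfolding lip_norm_def S_def[symmetric]
  proof (rule cSup_eq_non_empty[OF Sne S1])
    fix z assume ub: "\<And>w. w \<in> S \<Longrightarrow> w \<le> z"
    show "1 \<le> z"
    proof (rule ccontr)
      assume "\<not> 1 \<le> z"
      then have z1: "z < 1" by simp
      obtain n :: nat where n: "3 / (1 - z) < real n" using reals_Archimedean2 by blast
      have "3 < real n * (1 - z)" using n z1 by (simp add: field_simps)
      then have "z * real (n + 4) < real (n + 1)" using z1 by (simp add: algebra_simps)
      then have "z < real (n + 1) / real (n + 4)" by (simp add: pos_less_divide_eq del: of_nat_add)
      moreover obtain w where "w \<in> S" "real (n + 1) / real (n + 4) \<le> w" using low[of n] by blast
      ultimately show False using ub by fastforce
    qed
  qed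
  have "f \<notin> A_set M base"
  proof
    assume "f \<in> A_set M base"
    then obtain yv where "attains_norm_toward M f yv" unfolding A_set_def by blast
    then obtain pp qq :: "nat \<Rightarrow> 'a" where pq: "\<forall>k. pp k \<in> M \<and> qq k \<in> M \<and> pp k \<noteq> qq k"
      and lim: "(\<lambda>k. (1 / dist (pp k) (qq k)) *\<^sub>R (f (pp k) - f (qq k))) \<longlonglongrightarrow> yv"
      and ny: "norm yv = lip_norm M f"
      unfolding attains_norm_toward_def by blast
    have R: "\<And>k. Rep v ((1 / dist (pp k) (qq k)) *\<^sub>R (f (pp k) - f (qq k)))"
      using quot pq by blast
    have "norm yv \<noteq> 1"
      by (rule no_attain[where v=v, OF v1 vs R lim])
    then show False using ny lipn by simp
  qed
  then show ?thesis using fL by blast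
qed

lemma sepc_sym:
  assumes "\<And>n m. n < m \<Longrightarrow> r n + r m + (real (max n m) + 1) * min (r n) (r m) \<le> \<bar>c n - c m\<bar>"
  shows "sepc c r"
  unfolding sepc_def
proof (intro allI impI)
  fix n m :: nat assume "n \<noteq> m"
  then consider "n < m" | "m < n" by linarith
  then show "r n + r m + (real (max n m) + 1) * min (r n) (r m) \<le> \<bar>c n - c m\<bar>"
  proof cases
    case 1 then show ?thesis using assms by blast
  next
    case 2 then show ?thesis using assms[OF 2]
      by (simp add: max.commute min.commute add.commute abs_minus_commute)
  qed
qed

lemma sigA:
  fixes \<sigma> :: "nat \<Rightarrow> real"
  assumes pos: "\<And>i. \<sigma> i > 0" and dec: "\<And>i. \<sigma> (Suc i) * (real i + 4) \<le> \<sigma> i"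
  shows "sepc (\<lambda>n. \<sigma> (2*n)) (\<lambda>n. \<sigma> (2*n) - \<sigma> (2*n+1))"
    and "\<And>n. \<sigma> (2*n) - \<sigma> (2*n+1) > 0"
    and "\<And>n. \<sigma> (2*n) + \<sigma> (2*n+1) \<le> (\<sigma> (2*n) - \<sigma> (2*n+1)) * (1 + 2 / (real n + 2))"
proof -
  have lt: "\<sigma> (Suc i) < \<sigma> i" for i
  proof -
    have "\<sigma> (Suc i) * 1 < \<sigma> (Suc i) * (real i + 4)" using pos[of "Suc i"] by (intro mult_strict_left_mono) auto
    then show ?thesis using dec[of i] by simp
  qed
  have mono: "\<sigma> j \<le> \<sigma> i" if "i \<le> j" for i j
    using that
  proof (induction j)
    case 0 then show ?case by simp
  next
    case (Suc j) then show ?case using lt[of j] by (cases "i = Suc j") (auto simp: le_Suc_eq)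
  qed
  show "\<sigma> (2*n) - \<sigma> (2*n+1) > 0" for n using lt[of "2*n"] by simp
  show "\<sigma> (2*n) + \<sigma> (2*n+1) \<le> (\<sigma> (2*n) - \<sigma> (2*n+1)) * (1 + 2 / (real n + 2))" for n
  proof -
    have d: "\<sigma> (2*n+1) * (real (2*n) + 4) \<le> \<sigma> (2*n)" using dec[of "2*n"] by simp
    have "\<sigma> (2*n+1) * (real n + 3) \<le> \<sigma> (2*n+1) * (real (2*n) + 4)"
      using pos[of "2*n+1"] by (intro mult_left_mono) auto
    with d have k: "\<sigma> (2*n+1) * (real n + 3) \<le> \<sigma> (2*n)" by linarith
    have "(\<sigma> (2*n) - \<sigma> (2*n+1)) * (1 + 2 / (real n + 2)) =
        (\<sigma> (2*n) - \<sigma> (2*n+1)) + 2 * (\<sigma> (2*n) - \<sigma> (2*n+1)) / (real n + 2)"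
      by (simp add: field_simps)
    moreover have "2 * \<sigma> (2*n+1) \<le> 2 * (\<sigma> (2*n) - \<sigma> (2*n+1)) / (real n + 2)"
      using k by (simp add: field_simps)
    ultimately show ?thesis by linarith
  qed
  show "sepc (\<lambda>n. \<sigma> (2*n)) (\<lambda>n. \<sigma> (2*n) - \<sigma> (2*n+1))"
  proof (rule sepc_sym)
    fix n m :: nat assume nm: "n < m"
    have m1: "2*m - 1 \<ge> 2*n+1" "Suc (2*m-1) = 2*m" using nm by auto
    have "\<sigma> (2*m) * (real (2*m-1) + 4) \<le> \<sigma> (2*m-1)" using dec[of "2*m-1"] m1(2) by simp
    moreover have "\<sigma> (2*m) * (real m + 3) \<le> \<sigma> (2*m) * (real (2*m-1) + 4)"
      using pos[of "2*m"] nm by (intro mult_left_mono) auto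
    moreover have "\<sigma> (2*m-1) \<le> \<sigma> (2*n+1)" using mono m1(1) by blast
    ultimately have k: "\<sigma> (2*m) * (real m + 3) \<le> \<sigma> (2*n+1)" by linarith
    have mn: "min (\<sigma> (2*n) - \<sigma> (2*n+1)) (\<sigma> (2*m) - \<sigma> (2*m+1)) \<le> \<sigma> (2*m)"
      using pos[of "2*m+1"] by simp
    have "(real (max n m) + 1) * min (\<sigma> (2*n) - \<sigma> (2*n+1)) (\<sigma> (2*m) - \<sigma> (2*m+1))
        \<le> (real m + 1) * \<sigma> (2*m)"
      using nm mn by (simp add: max_absorb2 mult_left_mono)
    moreover have "\<sigma> (2*m) \<le> \<sigma> (2*n)" using mono nm by simp
    moreover have "\<sigma> (2*m+1) > 0" using pos by blast
    ultimately show "(\<sigma> (2*n) - \<sigma> (2*n+1)) + (\<sigma> (2*m) - \<sigma> (2*m+1)) +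
        (real (max n m) + 1) * min (\<sigma> (2*n) - \<sigma> (2*n+1)) (\<sigma> (2*m) - \<sigma> (2*m+1))
        \<le> \<bar>\<sigma> (2*n) - \<sigma> (2*m)\<bar>"
      using k by (simp add: algebra_simps)
  qed
qed

lemma sigB:
  fixes \<sigma> :: "nat \<Rightarrow> real"
  assumes pos: "\<sigma> 0 > 0" and inc: "\<And>i. \<sigma> i * (real i + 4) \<le> \<sigma> (Suc i)"
  shows "sepc (\<lambda>n. \<sigma> (2*n+1)) (\<lambda>n. \<sigma> (2*n+1) - \<sigma> (2*n))"
    and "\<And>n. \<sigma> (2*n+1) - \<sigma> (2*n) > 0"
    and "\<And>n. \<sigma> (2*n+1) + \<sigma> (2*n) \<le> (\<sigma> (2*n+1) - \<sigma> (2*n)) * (1 + 2 / (real n + 2))"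
proof -
  have pos': "\<sigma> i > 0" for i
  proof (induction i)
    case 0 then show ?case using pos .
  next
    case (Suc i)
    have "0 < \<sigma> i * (real i + 4)" using Suc by simp
    then show ?case using inc[of i] by linarith
  qed
  have lt: "\<sigma> i < \<sigma> (Suc i)" for i
  proof -
    have "\<sigma> i * 1 < \<sigma> i * (real i + 4)" using pos'[of i] by (intro mult_strict_left_mono) auto
    then show ?thesis using inc[of i] by simp
  qed
  have mono: "\<sigma> i \<le> \<sigma> j" if "i \<le> j" for i j
    using that
  proof (induction j)
    case 0 then show ?case by simp
  next
    case (Suc j) then show ?case using lt[of j] by (cases "i = Suc j") (auto simp: le_Suc_eq)
  qed
  show "\<sigma> (2*n+1) - \<sigma> (2*n) > 0" for n using lt[of "2*n"] by simp
  show "\<sigma> (2*n+1) + \<sigma> (2*n) \<le> (\<sigma> (2*n+1) - \<sigma> (2*n)) * (1 + 2 / (real n + 2))" for n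
  proof -
    have d: "\<sigma> (2*n) * (real (2*n) + 4) \<le> \<sigma> (2*n+1)" using inc[of "2*n"] by simp
    have "\<sigma> (2*n) * (real n + 3) \<le> \<sigma> (2*n) * (real (2*n) + 4)"
      using pos'[of "2*n"] by (intro mult_left_mono) auto
    with d have k: "\<sigma> (2*n) * (real n + 3) \<le> \<sigma> (2*n+1)" by linarith
    have "(\<sigma> (2*n+1) - \<sigma> (2*n)) * (1 + 2 / (real n + 2)) =
        (\<sigma> (2*n+1) - \<sigma> (2*n)) + 2 * (\<sigma> (2*n+1) - \<sigma> (2*n)) / (real n + 2)"
      by (simp add: field_simps)
    moreover have "2 * \<sigma> (2*n) \<le> 2 * (\<sigma> (2*n+1) - \<sigma> (2*n)) / (real n + 2)"
      using k by (simp add: field_simps)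
    ultimately show ?thesis by linarith
  qed
  show "sepc (\<lambda>n. \<sigma> (2*n+1)) (\<lambda>n. \<sigma> (2*n+1) - \<sigma> (2*n))"
  proof (rule sepc_sym)
    fix n m :: nat assume nm: "n < m"
    have m1: "2*m - 1 \<ge> 2*n+1" "Suc (2*m-1) = 2*m" using nm by auto
    have "\<sigma> (2*m-1) * (real (2*m-1) + 4) \<le> \<sigma> (2*m)" using inc[of "2*m-1"] m1(2) by simp
    moreover have "\<sigma> (2*n+1) * (real m + 3) \<le> \<sigma> (2*m-1) * (real (2*m-1) + 4)"
      using pos'[of "2*n+1"] nm mono[OF m1(1)] by (intro mult_mono) auto
    ultimately have k: "\<sigma> (2*n+1) * (real m + 3) \<le> \<sigma> (2*m)" by linarith
    have mn: "min (\<sigma> (2*n+1) - \<sigma> (2*n)) (\<sigma> (2*m+1) - \<sigma> (2*m)) \<le> \<sigma> (2*n+1)"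
      using pos'[of "2*n"] by simp
    have "(real (max n m) + 1) * min (\<sigma> (2*n+1) - \<sigma> (2*n)) (\<sigma> (2*m+1) - \<sigma> (2*m))
        \<le> (real m + 1) * \<sigma> (2*n+1)"
      using nm mn by (simp add: max_absorb2 mult_left_mono)
    moreover have "\<sigma> (2*n+1) \<le> \<sigma> (2*m+1)" using mono nm by simp
    moreover have "\<sigma> (2*n) > 0" using pos' by blast
    ultimately show "(\<sigma> (2*n+1) - \<sigma> (2*n)) + (\<sigma> (2*m+1) - \<sigma> (2*m)) +
        (real (max n m) + 1) * min (\<sigma> (2*n+1) - \<sigma> (2*n)) (\<sigma> (2*m+1) - \<sigma> (2*m))
        \<le> \<bar>\<sigma> (2*n+1) - \<sigma> (2*m+1)\<bar>"
      using k by (simp add: algebra_simps)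
  qed
qed

lemma dist_lip: "\<bar>dist p c - dist q c\<bar> \<le> dist p q"
  using abs_dist_diff_le[of p c q] by (simp add: dist_commute)

theorem corollary2p8:
  fixes M :: "'a::banach set" and base :: 'a
  assumes "fin_dim_space TYPE('a)"
    and "infinite M"
    and "base \<in> M"
    and "\<not> fin_dim_space TYPE('b::banach)"
  shows "A_set M base \<subset> (Lip0 M base :: ('a \<Rightarrow> 'b) set)"
proof -
  have nf: "\<And>F::'b set. finite F \<Longrightarrow> span F \<noteq> UNIV"
    using assms(4) unfolding fin_dim_space_def by blast
  define v :: "nat \<Rightarrow> 'b" where "v = vv"
  have v1: "\<And>n. norm (v n) = 1" unfolding v_def using vv_props(1)[OF nf] by blast
  have vs: "\<And>m n t. m < n \<Longrightarrow> 1/2 \<le> norm (v n - t *\<^sub>R v m)"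
    unfolding v_def using vv_props(2)[OF nf] by blast
  obtain B :: "'a set" where B: "finite B" "span B = UNIV"
    using assms(1) unfolding fin_dim_space_def by blast
  have cpt: "compact (cball (0::'a) R)" for R
    using span_cball_compact[OF B(1), of R] B(2) by simp
  have "\<exists>f::'a \<Rightarrow> 'b. f \<in> Lip0 M base \<and> f \<notin> A_set M base"
  proof (cases "bounded M")
    case True
    then obtain R where "M \<subseteq> cball 0 R" using bounded_subset_cball by (metis bounded_iff mem_cball_0 subsetI)
    then obtain c where c: "c islimpt M"
      using Heine_Borel_imp_Bolzano_Weierstrass[OF cpt assms(2)] by blast
    define nxt where "nxt = (\<lambda>e::real. SOME w. w \<in> M \<and> w \<noteq> c \<and> dist w c < e)"
    have nxt: "nxt e \<in> M \<and> nxt e \<noteq> c \<and> dist (nxt e) c < e" if "e > 0" for e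
    proof -
      have "\<exists>w. w \<in> M \<and> w \<noteq> c \<and> dist w c < e" using c that unfolding islimpt_approachable by blast
      then show ?thesis unfolding nxt_def by (rule someI_ex)
    qed
    define z where "z = rec_nat (nxt 1) (\<lambda>i w. nxt (dist w c / (real i + 4)))"
    have z0: "z 0 = nxt 1" and zS: "\<And>i. z (Suc i) = nxt (dist (z i) c / (real i + 4))"
      unfolding z_def by simp_all
    have zM: "z i \<in> M \<and> z i \<noteq> c" for i
    proof (induction i)
      case 0 then show ?case using nxt[of 1] z0 by simp
    next
      case (Suc i)
      then have "dist (z i) c / (real i + 4) > 0" by simp
      then show ?case using nxt zS by metis
    qed
    define \<sigma> where "\<sigma> i = dist (z i) c" for i
    have spos: "\<And>i. \<sigma> i > 0" unfolding \<sigma>_def using zM by simp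
    have sdec: "\<sigma> (Suc i) * (real i + 4) \<le> \<sigma> i" for i
    proof -
      have "dist (z i) c / (real i + 4) > 0" using zM[of i] by simp
      then have "\<sigma> (Suc i) < \<sigma> i / (real i + 4)" unfolding \<sigma>_def using nxt zS by metis
      then show ?thesis by (simp add: field_simps)
    qed
    note sA = sigA[OF spos sdec]
    show ?thesis
    proof (rule core[where \<rho>="\<lambda>p. dist p c" and x="\<lambda>n. z (2*n)" and y="\<lambda>n. z (2*n+1)"
          and c="\<lambda>n. \<sigma> (2*n)" and r="\<lambda>n. \<sigma> (2*n) - \<sigma> (2*n+1)", OF dist_lip _ _ _ _ _ sA(1) _ v1 vs assms(3)])
      show "\<And>n. z (2*n) \<in> M" "\<And>n. z (2*n+1) \<in> M" using zM by auto
      show "\<And>n. \<sigma> (2*n) = dist (z (2*n)) c" unfolding \<sigma>_def by simp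
      show "\<And>n. \<sigma> (2*n) - \<sigma> (2*n+1) = \<bar>dist (z (2*n)) c - dist (z (2*n+1)) c\<bar>"
        using sA(2) unfolding \<sigma>_def by (simp add: less_imp_le)
      show "\<forall>n. 0 < \<sigma> (2*n) - \<sigma> (2*n+1)" using sA(2) by blast
      show "dist (z (2*n)) (z (2*n+1)) \<le> (\<sigma> (2*n) - \<sigma> (2*n+1)) * (1 + 2 / (real n + 2))" for n
        using sA(3)[of n] dist_triangle2[of "z (2*n)" "z (2*n+1)" c] unfolding \<sigma>_def by linarith
    qed
  next
    case False
    have far: "\<exists>w\<in>M. e < dist w base" for e
    proof (rule ccontr)
      assume "\<not> (\<exists>w\<in>M. e < dist w base)"
      then have "M \<subseteq> cball base e" by (auto simp: dist_commute)
      then show False using False bounded_cball bounded_subset by blast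
    qed
    define nxt where "nxt = (\<lambda>e::real. SOME w. w \<in> M \<and> e < dist w base)"
    have nxt: "nxt e \<in> M \<and> e < dist (nxt e) base" for e
    proof -
      have "\<exists>w. w \<in> M \<and> e < dist w base" using far by blast
      then show ?thesis unfolding nxt_def by (rule someI_ex)
    qed
    define z where "z = rec_nat (nxt 1) (\<lambda>i w. nxt (dist w base * (real i + 4)))"
    have z0: "z 0 = nxt 1" and zS: "\<And>i. z (Suc i) = nxt (dist (z i) base * (real i + 4))"
      unfolding z_def by simp_all
    have zM: "z i \<in> M" for i by (cases i) (simp_all add: z0 zS nxt)
    define \<sigma> where "\<sigma> i = dist (z i) base" for i
    have s0: "\<sigma> 0 > 0" unfolding \<sigma>_def z0 using nxt[of 1] by linarith
    have sinc: "\<sigma> i * (real i + 4) \<le> \<sigma> (Suc i)" for i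
      unfolding \<sigma>_def using nxt zS by (metis less_imp_le)
    note sB = sigB[OF s0 sinc]
    show ?thesis
    proof (rule core[where \<rho>="\<lambda>p. dist p base" and x="\<lambda>n. z (2*n+1)" and y="\<lambda>n. z (2*n)"
          and c="\<lambda>n. \<sigma> (2*n+1)" and r="\<lambda>n. \<sigma> (2*n+1) - \<sigma> (2*n)", OF dist_lip _ _ _ _ _ sB(1) _ v1 vs assms(3)])
      show "\<And>n. z (2*n+1) \<in> M" "\<And>n. z (2*n) \<in> M" using zM by auto
      show "\<And>n. \<sigma> (2*n+1) = dist (z (2*n+1)) base" unfolding \<sigma>_def by simp
      show "\<And>n. \<sigma> (2*n+1) - \<sigma> (2*n) = \<bar>dist (z (2*n+1)) base - dist (z (2*n)) base\<bar>"
        using sB(2) unfolding \<sigma>_def by (simp add: less_imp_le)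
      show "\<forall>n. 0 < \<sigma> (2*n+1) - \<sigma> (2*n)" using sB(2) by blast
      show "dist (z (2*n+1)) (z (2*n)) \<le> (\<sigma> (2*n+1) - \<sigma> (2*n)) * (1 + 2 / (real n + 2))" for n
        using sB(3)[of n] dist_triangle2[of "z (2*n+1)" "z (2*n)" base] unfolding \<sigma>_def by linarith
    qed
  qed
  then obtain f :: "'a \<Rightarrow> 'b" where f: "f \<in> Lip0 M base" "f \<notin> A_set M base" by blast
  have "A_set M base \<subseteq> (Lip0 M base :: ('a \<Rightarrow> 'b) set)" unfolding A_set_def by blast
  then show ?thesis using f by blast
qed

end
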